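(* Let $n,m,\ell$ be integers with $n-1\ge m\ge \ell\ge 0$. Then $$\mathfrak Z_n(2^{\{m\}})\,\mathfrak Z_n((-1)^{\{\ell\}})=\mathcal Y_n\big(2^{\{m-\ell\}},1^{\{\ell\}}\big)+\Big(\prod_{r=1}^{n-1}(1-\zeta_n^r)\Big)\sum_{j=0}^{n-m-2}\mathcal Y_n\big(3^{\{m-\ell+1+j\}},2^{\{\ell-1-j\}},1^{\{n-m-2-j\}}\big).$$
   Context: Let $\zeta_n=e^{2\pi\sqrt{-1}/n}$. For integers $s_1,\dots,s_m$ (negative values allowed), define $\mathfrak Z_n(s_1,\dots,s_m):=\sum_{1\le i_1<\cdots<i_m\le n-1}\prod_{k=1}^{m}(1-\zeta_n^{i_k})^{-s_k}$ (equal to $1$ if $m=0$ and to $0$ if $m>n-1$). Define $\mathcal Y_n(s_1,\dots,s_m):=\sum_{\sigma}\mathfrak Z_n(\sigma)$, where $\sigma$ runs over all distinct rearrangements of $(s_1,\dots,s_m)$; $\mathcal Y_n$ of the empty sequence is $1$. Notation: $a^{\{k\}}$ denotes the block $a,\dots,a$ of length $k$; any $\mathcal Y_n$ term in which some block has negative length is interpreted as $0$. *)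

theory Defs
  imports Complex_Main "HOL-Library.Multiset"
begin

definition zeta :: "nat \<Rightarrow> complex" where
  "zeta n = cis (2 * pi / real n)"

definition idx_tuples :: "nat \<Rightarrow> nat \<Rightarrow> nat list set" where
  "idx_tuples n m = {is. length is = m \<and> sorted_wrt (<) is \<and> set is \<subseteq> {1..n-1}}"

definition Zn :: "nat \<Rightarrow> int list \<Rightarrow> complex" where
  "Zn n s = (\<Sum>is\<in>idx_tuples n (length s).
              \<Prod>k<length s. (1 - zeta n ^ (is ! k)) powi (- (s ! k)))"

definition Yn :: "nat \<Rightarrow> int list \<Rightarrow> complex" where
  "Yn n s = (\<Sum>t\<in>{t. mset t = mset s}. Zn n t)"

text \<open>Y_n applied to a sequence of blocks a^{k}, given as (a,k) pairs;
  zero if some block has negative length.\<close>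
definition Yblocks :: "nat \<Rightarrow> (int \<times> int) list \<Rightarrow> complex" where
  "Yblocks n bs = (if \<exists>b\<in>set bs. snd b < 0 then 0
                   else Yn n (concat (map (\<lambda>(a,k). replicate (nat k) a) bs)))"

end

theory Submission
  imports Defs
begin

definition II :: "nat \<Rightarrow> nat set" where "II n = {1..n-1}"
definition xx :: "nat \<Rightarrow> nat \<Rightarrow> complex" where "xx n i = 1 - zeta n ^ i"
definition WW :: "nat \<Rightarrow> (nat \<Rightarrow> int) \<Rightarrow> complex" where
  "WW n f = (\<Prod>i\<in>II n. xx n i powi (- f i))"
definition cc :: "nat \<Rightarrow> (nat \<Rightarrow> int) \<Rightarrow> int \<Rightarrow> nat" where
  "cc n f v = card {i\<in>II n. f i = v}"
definition GG :: "nat \<Rightarrow> int list \<Rightarrow> (nat \<Rightarrow> int) set" where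
  "GG n s = {f. (\<forall>i. i \<notin> II n \<longrightarrow> f i = 0) \<and> (\<forall>v. v \<noteq> 0 \<longrightarrow> cc n f v = count (mset s) v)}"

lemma count_image_mset_set:
  assumes "finite A"
  shows "count (image_mset f (mset_set A)) v = card {a\<in>A. f a = v}"
  using assms
proof (induction A rule: finite_induct)
  case empty
  then show ?case by simp
next
  case (insert x F)
  have "{a \<in> insert x F. f a = v} = (if f x = v then insert x {a\<in>F. f a = v} else {a\<in>F. f a = v})"
    by auto
  then show ?case using insert by auto
qed

lemma finite_II[simp]: "finite (II n)" by (simp add: II_def)

lemma Yn_GG:
  assumes s0: "0 \<notin> set s"
  shows "Yn n s = sum (WW n) (GG n s)"
proof -
  let ?T = "{t. mset t = mset s}"
  let ?X = "idx_tuples n (length s)"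
  let ?g = "\<lambda>(t, is). \<Prod>k<length s. (1 - zeta n ^ (is ! k)) powi (- (t ! k))"
  have "Yn n s = (\<Sum>t\<in>?T. \<Sum>is\<in>?X. \<Prod>k<length s. (1 - zeta n ^ (is ! k)) powi (- (t ! k)))"
    unfolding Yn_def Zn_def
    by (rule sum.cong) (auto dest: mset_eq_length)
  also have "\<dots> = sum ?g (?T \<times> ?X)"
    by (simp add: sum.cartesian_product)
  also have "\<dots> = sum (WW n) (GG n s)"
  proof (rule sum.reindex_bij_witness[where j = "\<lambda>(t,is). (\<lambda>i. case map_of (zip is t) i of None \<Rightarrow> 0 | Some v \<Rightarrow> v)"
        and i = "\<lambda>f. (map f (sorted_list_of_set {i\<in>II n. f i \<noteq> 0}), sorted_list_of_set {i\<in>II n. f i \<noteq> 0})"])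
    fix a assume a: "a \<in> ?T \<times> ?X"
    obtain t "is" where a_eq: "a = (t, is)" by (cases a)
    have mt: "mset t = mset s" and lis: "length is = length s" and sis: "sorted_wrt (<) is"
      and sub: "set is \<subseteq> {1..n-1}"
      using a a_eq by (auto simp: idx_tuples_def)
    have lt: "length t = length s" using mt by (metis size_mset)
    have dis: "distinct is" and so: "sorted is" using sis by (auto simp: strict_sorted_iff)
    define F where "F = (\<lambda>i. case map_of (zip is t) i of None \<Rightarrow> 0 | Some v \<Rightarrow> (v::int))"
    have Fn: "k < length is \<Longrightarrow> F (is ! k) = t ! k" for k
      unfolding F_def using map_of_zip_nth[of "is" t k] lis lt dis by simp
    have Fout: "i \<notin> set is \<Longrightarrow> F i = 0" for i
    proof -
      assume "i \<notin> set is"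
      then have "map_of (zip is t) i = None"
        using lis lt by (metis dom_map_of_zip domIff)
      then show "F i = 0" unfolding F_def by simp
    qed
    have t0: "0 \<notin> set t" using s0 mt by (metis set_mset_mset)
    have supp: "{i\<in>II n. F i \<noteq> 0} = set is"
    proof -
      have "i \<in> set is \<Longrightarrow> F i \<noteq> 0" for i
        using Fn t0 lis lt by (metis in_set_conv_nth nth_mem)
      then show ?thesis using Fout sub by (auto simp: II_def)
    qed
    have mapF: "map F is = t"
      by (rule nth_equalityI) (auto simp: lis lt Fn)
    show "(\<lambda>f. (map f (sorted_list_of_set {i\<in>II n. f i \<noteq> 0}), sorted_list_of_set {i\<in>II n. f i \<noteq> 0}))
        ((\<lambda>(t,is). (\<lambda>i. case map_of (zip is t) i of None \<Rightarrow> 0 | Some v \<Rightarrow> v)) a) = a"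
      using a_eq supp mapF sorted_list_of_set.idem_if_sorted_distinct[OF so dis]
      by (simp add: F_def[symmetric])
    show "(\<lambda>(t,is). (\<lambda>i. case map_of (zip is t) i of None \<Rightarrow> 0 | Some v \<Rightarrow> v)) a \<in> GG n s"
    proof -
      have "count (mset s) v = card {i\<in>II n. F i = v}" if "v \<noteq> 0" for v
      proof -
        have "count (mset s) v = count (image_mset F (mset_set (set is))) v"
          using mt mapF by (metis mset_map mset_set_set dis)
        also have "\<dots> = card {i\<in>set is. F i = v}" by (simp add: count_image_mset_set)
        also have "{i\<in>set is. F i = v} = {i\<in>II n. F i = v}" using supp that by auto
        finally show ?thesis .
      qed
      moreover have "i \<notin> II n \<Longrightarrow> F i = 0" for i using supp Fout by blast
      ultimately show ?thesis using a_eq by (simp add: GG_def cc_def F_def[symmetric])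
    qed
    show "WW n ((\<lambda>(t,is). (\<lambda>i. case map_of (zip is t) i of None \<Rightarrow> 0 | Some v \<Rightarrow> v)) a) = ?g a"
    proof -
      have "?g a = (\<Prod>k<length is. xx n (is ! k) powi (- F (is ! k)))"
        using a_eq lis Fn by (simp add: xx_def)
      also have "\<dots> = (\<Prod>i\<in>set is. xx n i powi (- F i))"
      proof -
        have inj: "inj_on ((!) is) {..<length is}" using dis by (simp add: inj_on_nth)
        have st: "set is = (!) is ` {..<length is}" by (auto simp: in_set_conv_nth)
        show ?thesis unfolding st prod.reindex[OF inj] by simp
      qed
      also have "\<dots> = WW n F"
        unfolding WW_def
        by (rule prod.mono_neutral_left) (use supp Fout in auto)
      finally show ?thesis using a_eq by (simp add: F_def[symmetric])
    qed
  next
    fix f assume f: "f \<in> GG n s"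
    define D where "D = {i\<in>II n. f i \<noteq> 0}"
    define js where "js = sorted_list_of_set D"
    have fD: "finite D" by (simp add: D_def)
    have setis: "set js = D" and disi: "distinct js" and sw: "sorted_wrt (<) js"
      using fD by (auto simp: js_def)
    have fout: "i \<notin> D \<Longrightarrow> f i = 0" for i using f by (auto simp: D_def GG_def)
    have ms: "mset (map f js) = mset s"
    proof (rule multiset_eqI)
      fix v
      have "count (mset (map f js)) v = card {i\<in>D. f i = v}"
        using setis disi fD by (simp add: mset_set_set[symmetric] count_image_mset_set)
      also have "\<dots> = count (mset s) v"
      proof (cases "v = 0")
        case True
        then show ?thesis using s0 by (auto simp: D_def)
      next
        case False
        then have "{i\<in>D. f i = v} = {i\<in>II n. f i = v}" by (auto simp: D_def)
        then show ?thesis using f False by (simp add: GG_def cc_def)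
      qed
      finally show "count (mset (map f js)) v = count (mset s) v" .
    qed
    have "length js = length s" using ms by (metis length_map size_mset)
    then have "js \<in> ?X" using sw setis by (auto simp: idx_tuples_def D_def II_def)
    then show "(\<lambda>f. (map f (sorted_list_of_set {i\<in>II n. f i \<noteq> 0}), sorted_list_of_set {i\<in>II n. f i \<noteq> 0})) f \<in> ?T \<times> ?X"
      using ms by (simp add: D_def[symmetric] js_def[symmetric])
    show "(\<lambda>(t,js). (\<lambda>i. case map_of (zip js t) i of None \<Rightarrow> 0 | Some v \<Rightarrow> v))
       ((\<lambda>f. (map f (sorted_list_of_set {i\<in>II n. f i \<noteq> 0}), sorted_list_of_set {i\<in>II n. f i \<noteq> 0})) f) = f"
      using setis fout by (auto simp: D_def[symmetric] js_def[symmetric] map_of_zip_map)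
  qed
  finally show ?thesis .
qed


lemma GG_iff:
  assumes "finite V" "0 \<notin> V" "set s \<subseteq> V"
  shows "f \<in> GG n s \<longleftrightarrow> (\<forall>i. i \<notin> II n \<longrightarrow> f i = 0) \<and> (\<forall>i\<in>II n. f i = 0 \<or> f i \<in> V)
            \<and> (\<forall>v\<in>V. cc n f v = count (mset s) v)"
proof
  assume f: "f \<in> GG n s"
  have "f i = 0 \<or> f i \<in> V" if "i \<in> II n" for i
  proof (rule ccontr)
    assume "\<not> (f i = 0 \<or> f i \<in> V)"
    then have "f i \<noteq> 0" "f i \<notin> set s" using assms by auto
    then have "cc n f (f i) = 0" using f by (simp add: GG_def count_mset_0_iff)
    moreover have "i \<in> {j\<in>II n. f j = f i}" using that by simp
    moreover have "finite {j\<in>II n. f j = f i}" by simp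
    ultimately show False unfolding cc_def by (metis card_0_eq empty_iff)
  qed
  moreover have "cc n f v = count (mset s) v" if "v \<in> V" for v
  proof -
    have "v \<noteq> 0" using that assms by auto
    then show ?thesis using f by (simp add: GG_def)
  qed
  ultimately show "(\<forall>i. i \<notin> II n \<longrightarrow> f i = 0) \<and> (\<forall>i\<in>II n. f i = 0 \<or> f i \<in> V)
            \<and> (\<forall>v\<in>V. cc n f v = count (mset s) v)"
    using f by (auto simp: GG_def)
next
  assume f: "(\<forall>i. i \<notin> II n \<longrightarrow> f i = 0) \<and> (\<forall>i\<in>II n. f i = 0 \<or> f i \<in> V)
            \<and> (\<forall>v\<in>V. cc n f v = count (mset s) v)"
  have cv: "cc n f v = count (mset s) v" if "v \<noteq> 0" for v
  proof (cases "v \<in> V")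
    case True then show ?thesis using f by auto
  next
    case False
    then have "{i\<in>II n. f i = v} = {}" using f that by auto
    moreover have "count (mset s) v = 0" using False assms by (auto simp: count_mset_0_iff)
    ultimately show ?thesis by (metis card.empty cc_def)
  qed
  then show "f \<in> GG n s" unfolding GG_def using f cv by blast
qed

lemma finite_GG:
  assumes "0 \<notin> set s"
  shows "finite (GG n s)"
proof -
  have "GG n s \<subseteq> {f. \<forall>x. (x \<in> II n \<longrightarrow> f x \<in> insert 0 (set s)) \<and> (x \<notin> II n \<longrightarrow> f x = 0)}"
    using GG_iff[where V="set s" and s=s and n=n] assms by auto
  moreover have "finite {f. \<forall>x. (x \<in> II n \<longrightarrow> f x \<in> insert 0 (set s)) \<and> (x \<notin> II n \<longrightarrow> f x = (0::int))}"
    by (rule finite_set_of_finite_funs) auto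
  ultimately show ?thesis by (rule finite_subset)
qed

lemma Zn_rep: "Zn n (replicate m c) = Yn n (replicate m c)"
proof -
  have "{t. mset t = mset (replicate m c)} = {replicate m c}"
  proof safe
    fix t assume "mset t = mset (replicate m c)"
    then have "length t = m" "set t \<subseteq> {c}"
      by (metis length_replicate size_mset, metis set_mset_mset set_replicate_Suc set_replicate_conv_if empty_subsetI equalityE)
    then show "t = replicate m c" by (simp add: replicate_eqI subset_iff)
  qed
  then show ?thesis by (simp add: Yn_def)
qed

lemma card_sum_vals:
  assumes "finite A" "\<forall>i\<in>A. f i \<in> V" "finite V"
  shows "card A = (\<Sum>v\<in>V. card {i\<in>A. f i = v})"
proof -
  have "A = (\<Union>v\<in>V. {i\<in>A. f i = v})" using assms by auto
  then have "card A = card (\<Union>v\<in>V. {i\<in>A. f i = v})" by simp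
  also have "\<dots> = (\<Sum>v\<in>V. card {i\<in>A. f i = v})"
    by (rule card_UN_disjoint) (use assms in auto)
  finally show ?thesis .
qed

lemma xx_nz: "i \<in> II n \<Longrightarrow> xx n i \<noteq> 0"
proof
  assume i: "i \<in> II n" and z: "xx n i = 0"
  then have i1: "1 \<le> i" "i < n" by (auto simp: II_def)
  have "zeta n ^ i = 1" using z by (simp add: xx_def)
  then have "Re (cis (2*pi/real n) ^ i) = 1" by (simp add: zeta_def)
  then have "cos (real i * (2 * pi / real n)) = 1" by (simp only: cos_n_Re_cis_pow_n)
  then obtain k :: int where k: "real i * (2 * pi / real n) = real_of_int k * 2 * pi"
    using cos_one_2pi_int by blast
  have np: "real n > 0" using i1 by simp
  have "real i = real_of_int k * real n"
    using k np by (simp add: field_simps)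
  then have "int i = k * int n" by (metis of_int_eq_iff of_int_mult of_int_of_nat_eq)
  moreover have "int i > 0" "int i < int n" using i1 by auto
  ultimately show False
    by (metis mult_less_cancel_right2 mult_pos_neg not_less of_nat_less_0_iff
        pos_zmult_eq_1_iff_lemma zero_less_mult_pos2 int_one_le_iff_zero_less nat_less_iff zmult_zless_mono2_lemma less_imp_le)
qed

lemma WW_mult: "WW n g * WW n h = WW n (\<lambda>i. g i + h i)"
  unfolding WW_def prod.distrib[symmetric]
proof (rule prod.cong)
  fix x assume x: "x \<in> II n"
  have "xx n x powi (- (g x + h x)) = xx n x powi (- g x + - h x)" by simp
  also have "\<dots> = xx n x powi (- g x) * xx n x powi (- h x)"
    by (rule power_int_add) (simp add: xx_nz x)
  finally show "xx n x powi - g x * xx n x powi - h x = xx n x powi - (g x + h x)" by simp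
qed simp

lemma WW_shift: "WW n f = prod (xx n) (II n) * WW n (\<lambda>i. if i \<in> II n then f i + 1 else 0)"
  unfolding WW_def prod.distrib[symmetric]
proof (rule prod.cong)
  fix x assume x: "x \<in> II n"
  have nz: "xx n x \<noteq> 0" by (simp add: xx_nz x)
  have "xx n x powi (- (f x + 1)) = xx n x powi (- f x + - 1)" by simp
  also have "\<dots> = xx n x powi (- f x) * xx n x powi (- 1)"
    by (rule power_int_add) (simp add: nz)
  finally have "xx n x * xx n x powi (- (f x + 1)) = xx n x powi (- f x)"
    using nz by (simp add: power_int_minus field_simps)
  then show "xx n x powi - f x = xx n x * xx n x powi - (if x \<in> II n then f x + 1 else 0)"
    using x by simp
qed simp


lemma memA: "g \<in> GG n (replicate M 2) \<longleftrightarrow>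
   (\<forall>i. i \<notin> II n \<longrightarrow> g i = 0) \<and> (\<forall>i\<in>II n. g i = 0 \<or> g i = 2) \<and> cc n g 2 = M"
  by (subst GG_iff[where V="{2}"]) auto

lemma memB: "h \<in> GG n (replicate L (-1)) \<longleftrightarrow>
   (\<forall>i. i \<notin> II n \<longrightarrow> h i = 0) \<and> (\<forall>i\<in>II n. h i = 0 \<or> h i = -1) \<and> cc n h (-1) = L"
  by (subst GG_iff[where V="{-1}"]) auto

lemma memG0: "f \<in> GG n (replicate a 2 @ replicate b 1) \<longleftrightarrow>
   (\<forall>i. i \<notin> II n \<longrightarrow> f i = 0) \<and> (\<forall>i\<in>II n. f i = 0 \<or> f i = 1 \<or> f i = 2) \<and> cc n f 2 = a \<and> cc n f 1 = b"
  by (subst GG_iff[where V="{1,2}"]) auto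

lemma memGj: "f \<in> GG n (replicate a 3 @ replicate b 2 @ replicate c 1) \<longleftrightarrow>
   (\<forall>i. i \<notin> II n \<longrightarrow> f i = 0) \<and> (\<forall>i\<in>II n. f i = 0 \<or> f i = 1 \<or> f i = 2 \<or> f i = 3)
     \<and> cc n f 3 = a \<and> cc n f 2 = b \<and> cc n f 1 = c"
  by (subst GG_iff[where V="{1,2,3}"]) auto

lemma card_split: "finite A \<Longrightarrow> card {i\<in>A. P i} = card {i\<in>A. P i \<and> Q i} + card {i\<in>A. P i \<and> \<not> Q i}"
proof -
  assume "finite A"
  then have "card ({i\<in>A. P i \<and> Q i} \<union> {i\<in>A. P i \<and> \<not> Q i}) = card {i\<in>A. P i \<and> Q i} + card {i\<in>A. P i \<and> \<not> Q i}"
    by (intro card_Un_disjoint) auto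
  moreover have "{i\<in>A. P i \<and> Q i} \<union> {i\<in>A. P i \<and> \<not> Q i} = {i\<in>A. P i}" by auto
  ultimately show ?thesis by simp
qed

lemma pair_counts:
  assumes fI: "finite I" and gv: "\<forall>i\<in>I. g i = 0 \<or> g i = (2::int)" and hv: "\<forall>i\<in>I. h i = 0 \<or> h i = (-1::int)"
  shows "card {i\<in>I. g i = 2} = card {i\<in>I. g i = 2 \<and> h i = -1} + card {i\<in>I. g i = 2 \<and> h i = 0}"
    and "card {i\<in>I. h i = -1} = card {i\<in>I. g i = 2 \<and> h i = -1} + card {i\<in>I. g i = 0 \<and> h i = -1}"
    and "card I = card {i\<in>I. g i = 2 \<and> h i = -1} + card {i\<in>I. g i = 2 \<and> h i = 0}
                 + card {i\<in>I. g i = 0 \<and> h i = -1} + card {i\<in>I. g i = 0 \<and> h i = 0}"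
proof -
  have e1: "{i\<in>I. g i = 2 \<and> \<not> h i = -1} = {i\<in>I. g i = 2 \<and> h i = 0}" using hv by auto
  show "card {i\<in>I. g i = 2} = card {i\<in>I. g i = 2 \<and> h i = -1} + card {i\<in>I. g i = 2 \<and> h i = 0}"
    using card_split[OF fI, of "\<lambda>i. g i = 2" "\<lambda>i. h i = -1"] e1 by simp
  have e2: "{i\<in>I. h i = -1 \<and> \<not> g i = 2} = {i\<in>I. g i = 0 \<and> h i = -1}" using gv by auto
  have e2': "{i\<in>I. h i = -1 \<and> g i = 2} = {i\<in>I. g i = 2 \<and> h i = -1}" by auto
  show "card {i\<in>I. h i = -1} = card {i\<in>I. g i = 2 \<and> h i = -1} + card {i\<in>I. g i = 0 \<and> h i = -1}"
    using card_split[OF fI, of "\<lambda>i. h i = -1" "\<lambda>i. g i = 2"] e2 e2' by simp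
  have e3: "{i\<in>I. True \<and> \<not> g i = 2} = {i\<in>I. g i = 0}" using gv by auto
  have e4: "{i\<in>I. g i = 0 \<and> \<not> h i = -1} = {i\<in>I. g i = 0 \<and> h i = 0}" using hv by auto
  have c3: "card I = card {i\<in>I. g i = 2} + card {i\<in>I. g i = 0}"
    using card_split[OF fI, of "\<lambda>i. True" "\<lambda>i. g i = 2"] e3 by simp
  have c4: "card {i\<in>I. g i = 0} = card {i\<in>I. g i = 0 \<and> h i = -1} + card {i\<in>I. g i = 0 \<and> h i = 0}"
    using card_split[OF fI, of "\<lambda>i. g i = 0" "\<lambda>i. h i = -1"] e4 by simp
  show "card I = card {i\<in>I. g i = 2 \<and> h i = -1} + card {i\<in>I. g i = 2 \<and> h i = 0}
                 + card {i\<in>I. g i = 0 \<and> h i = -1} + card {i\<in>I. g i = 0 \<and> h i = 0}"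
    using c3 c4 card_split[OF fI, of "\<lambda>i. g i = 2" "\<lambda>i. h i = -1"] e1 by simp
qed

lemma card_II: "card (II n) = n - 1" by (simp add: II_def)


lemma quad_counts:
  assumes "finite I" "\<forall>i\<in>I. f i = 0 \<or> f i = 1 \<or> f i = 2 \<or> f i = (3::int)"
  shows "card I = card {i\<in>I. f i = 0} + card {i\<in>I. f i = 1} + card {i\<in>I. f i = 2} + card {i\<in>I. f i = 3}"
  using card_sum_vals[of I f "{0,1,2,3}"] assms by simp

lemma two_counts:
  assumes "finite I" "a \<noteq> b"
  shows "card {i\<in>I. f i = a \<or> f i = b} = card {i\<in>I. f i = a} + card {i\<in>I. f i = b}"
proof -
  have "card ({i\<in>I. f i = a} \<union> {i\<in>I. f i = b}) = card {i\<in>I. f i = a} + card {i\<in>I. f i = b}"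
    by (rule card_Un_disjoint) (use assms in auto)
  moreover have "{i\<in>I. f i = a} \<union> {i\<in>I. f i = b} = {i\<in>I. f i = a \<or> f i = b}" by auto
  ultimately show ?thesis by simp
qed

lemma step3:
  fixes N M L :: nat
  assumes LM: "L \<le> M"
  shows "(\<Sum>p\<in>(GG N (replicate M 2) \<times> GG N (replicate L (-1))) \<inter> {p. \<forall>i. fst p i + snd p i \<noteq> -1}.
            WW N (\<lambda>i. fst p i + snd p i))
         = sum (WW N) (GG N (replicate (M-L) 2 @ replicate L 1))"
proof (rule sum.reindex_bij_witness[where j="\<lambda>p i. fst p i + snd p i"
      and i="\<lambda>f. (\<lambda>i. if f i \<noteq> 0 then 2 else 0, \<lambda>i. if f i = 1 then -1 else 0)"])
  fix p assume p: "p \<in> (GG N (replicate M 2) \<times> GG N (replicate L (-1))) \<inter> {p. \<forall>i. fst p i + snd p i \<noteq> -1}"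
  obtain g h where ph: "p = (g, h)" by (cases p)
  have g0: "\<forall>i. i \<notin> II N \<longrightarrow> g i = 0" and gv: "\<forall>i\<in>II N. g i = 0 \<or> g i = 2" and gc: "cc N g 2 = M"
    and h0: "\<forall>i. i \<notin> II N \<longrightarrow> h i = 0" and hv: "\<forall>i\<in>II N. h i = 0 \<or> h i = -1" and hc: "cc N h (-1) = L"
    and q: "\<forall>i. g i + h i \<noteq> -1"
    using p ph by (auto simp: memA memB)
  note pc = pair_counts[OF finite_II gv hv]
  have e0: "{i\<in>II N. g i = 0 \<and> h i = -1} = {}"
  proof -
    have "\<not> (g i = 0 \<and> h i = -1)" for i using q[rule_format, of i] by auto
    then show ?thesis by blast
  qed
  have pt: "(g i = 0 \<or> g i = 2) \<and> (h i = 0 \<or> h i = -1)" if "i \<in> II N" for i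
    using gv hv that by blast
  have e2: "{i\<in>II N. g i + h i = 2} = {i\<in>II N. g i = 2 \<and> h i = 0}"
  proof -
    have "g i + h i = 2 \<longleftrightarrow> g i = 2 \<and> h i = 0" if "i \<in> II N" for i using pt[OF that] by auto
    then show ?thesis by blast
  qed
  have e1: "{i\<in>II N. g i + h i = 1} = {i\<in>II N. g i = 2 \<and> h i = -1}"
  proof -
    have "g i + h i = 1 \<longleftrightarrow> g i = 2 \<and> h i = -1" if "i \<in> II N" for i using pt[OF that] by auto
    then show ?thesis by blast
  qed
  have "(\<lambda>i. if g i + h i \<noteq> 0 then 2 else 0) = g"
  proof
    fix i show "(if g i + h i \<noteq> 0 then 2 else 0) = g i"
      using pt[of i] g0 h0 q[rule_format, of i] by (cases "i \<in> II N") auto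
  qed
  moreover have "(\<lambda>i. if g i + h i = 1 then -1 else 0) = h"
  proof
    fix i show "(if g i + h i = 1 then -1 else 0) = h i"
      using pt[of i] g0 h0 q[rule_format, of i] by (cases "i \<in> II N") auto
  qed
  ultimately show "(\<lambda>f. (\<lambda>i. if f i \<noteq> 0 then 2 else 0, \<lambda>i. if f i = 1 then -1 else 0)) ((\<lambda>p i. fst p i + snd p i) p) = p"
    using ph by simp
  show "(\<lambda>p i. fst p i + snd p i) p \<in> GG N (replicate (M-L) 2 @ replicate L 1)"
  proof -
    have a: "card {i\<in>II N. g i = 2 \<and> h i = -1} + card {i\<in>II N. g i = 2 \<and> h i = 0} = M"
      using pc(1) gc by (simp add: cc_def)
    have b: "card {i\<in>II N. g i = 2 \<and> h i = -1} = L"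
      using pc(2) hc e0 by (simp add: cc_def)
    have c2: "cc N (\<lambda>i. g i + h i) 2 = M - L" unfolding cc_def e2 using a b by simp
    have c1: "cc N (\<lambda>i. g i + h i) 1 = L" unfolding cc_def e1 using b by simp
    have v: "\<forall>i\<in>II N. g i + h i = 0 \<or> g i + h i = 1 \<or> g i + h i = 2"
    proof
      fix i assume "i \<in> II N"
      then show "g i + h i = 0 \<or> g i + h i = 1 \<or> g i + h i = 2"
        using pt[of i] q[rule_format, of i] by auto
    qed
    show ?thesis unfolding memG0 ph using g0 h0 v c1 c2 by simp
  qed
  show "WW N ((\<lambda>p i. fst p i + snd p i) p) = WW N (\<lambda>i. fst p i + snd p i)" by simp
next
  fix f assume f: "f \<in> GG N (replicate (M-L) 2 @ replicate L 1)"
  have f0: "\<forall>i. i \<notin> II N \<longrightarrow> f i = 0" and fv: "\<forall>i\<in>II N. f i = 0 \<or> f i = 1 \<or> f i = 2"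
    and f2: "cc N f 2 = M - L" and f1: "cc N f 1 = L"
    using f by (auto simp: memG0)
  show "(\<lambda>p i. fst p i + snd p i) ((\<lambda>f. (\<lambda>i. if f i \<noteq> 0 then 2 else 0, \<lambda>i. if f i = 1 then -1 else 0)) f) = f"
  proof
    fix i show "(\<lambda>p i. fst p i + snd p i) ((\<lambda>f. (\<lambda>i. if f i \<noteq> 0 then 2 else 0, \<lambda>i. if f i = 1 then -1 else 0)) f) i = f i"
      using fv[rule_format, of i] f0[rule_format, of i] by (cases "i \<in> II N") auto
  qed
  have "{i\<in>II N. (if f i \<noteq> 0 then 2 else 0) = (2::int)} = {i\<in>II N. f i = 1 \<or> f i = 2}"
  proof -
    have "(if f i \<noteq> 0 then 2 else 0) = (2::int) \<longleftrightarrow> f i = 1 \<or> f i = 2" if "i \<in> II N" for i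
      using fv[rule_format, OF that] by auto
    then show ?thesis by blast
  qed
  then have cg: "cc N (\<lambda>i. if f i \<noteq> 0 then 2 else 0) 2 = M"
    using two_counts[OF finite_II[of N], where a=1 and b=2 and f=f] f1 f2 LM by (simp add: cc_def)
  have "{i\<in>II N. (if f i = 1 then -1 else 0) = (-1::int)} = {i\<in>II N. f i = 1}" by auto
  then have ch: "cc N (\<lambda>i. if f i = 1 then -1 else 0) (-1) = L"
    using f1 by (simp add: cc_def)
  show "(\<lambda>f. (\<lambda>i. if f i \<noteq> 0 then 2 else 0, \<lambda>i. if f i = 1 then -1 else 0)) f
     \<in> (GG N (replicate M 2) \<times> GG N (replicate L (-1))) \<inter> {p. \<forall>i. fst p i + snd p i \<noteq> -1}"
    using cg ch f0 by (auto simp: memA memB)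
qed


lemma step4_bij:
  fixes N M L :: nat
  assumes LM: "L \<le> M" and MN: "M + 1 \<le> N"
  shows "(\<Sum>p\<in>(GG N (replicate M 2) \<times> GG N (replicate L (-1))) - {p. \<forall>i. fst p i + snd p i \<noteq> -1}.
            WW N (\<lambda>i. if i \<in> II N then fst p i + snd p i + 1 else 0))
       = (\<Sum>x\<in>Sigma {j::int. 0 \<le> j \<and> j \<le> int N - int M - 2 \<and> j \<le> int L - 1}
              (\<lambda>j. GG N (replicate (nat (int M - int L + 1 + j)) 3 @ replicate (nat (int L - 1 - j)) 2
                         @ replicate (nat (int N - int M - 2 - j)) 1)). WW N (snd x))"
proof (rule sum.reindex_bij_witness[where
      j="\<lambda>p. (int (card {i\<in>II N. fst p i + snd p i = -1}) - 1, \<lambda>i. if i \<in> II N then fst p i + snd p i + 1 else 0)"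
      and i="\<lambda>x. (\<lambda>i. if snd x i = 2 \<or> snd x i = 3 then 2 else 0, \<lambda>i. if i \<in> II N \<and> (snd x i = 0 \<or> snd x i = 2) then -1 else 0)"])
  fix p assume p: "p \<in> (GG N (replicate M 2) \<times> GG N (replicate L (-1))) - {p. \<forall>i. fst p i + snd p i \<noteq> -1}"
  obtain g h where ph: "p = (g, h)" by (cases p)
  have g0: "\<forall>i. i \<notin> II N \<longrightarrow> g i = 0" and gv: "\<forall>i\<in>II N. g i = 0 \<or> g i = 2" and gc: "cc N g 2 = M"
    and h0: "\<forall>i. i \<notin> II N \<longrightarrow> h i = 0" and hv: "\<forall>i\<in>II N. h i = 0 \<or> h i = -1" and hc: "cc N h (-1) = L"
    and q: "\<exists>i. g i + h i = -1"
    using p ph by (auto simp: memA memB)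
  note pc = pair_counts[OF finite_II gv hv]
  have pt: "(g i = 0 \<or> g i = 2) \<and> (h i = 0 \<or> h i = -1)" if "i \<in> II N" for i
    using gv hv that by blast
  obtain i0 where i0: "g i0 + h i0 = -1" using q by blast
  have i0I: "i0 \<in> II N" using i0 g0 h0 by (metis add.right_neutral zero_neq_neg_one)
  define F where "F = (\<lambda>i. if i \<in> II N then g i + h i + 1 else 0)"
  have setc: "{i\<in>II N. g i + h i = -1} = {i\<in>II N. g i = 0 \<and> h i = -1}"
  proof -
    have "g i + h i = -1 \<longleftrightarrow> g i = 0 \<and> h i = -1" if "i \<in> II N" for i using pt[OF that] by auto
    then show ?thesis by blast
  qed
  have set3: "{i\<in>II N. F i = 3} = {i\<in>II N. g i = 2 \<and> h i = 0}"
  proof -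
    have "F i = 3 \<longleftrightarrow> g i = 2 \<and> h i = 0" if "i \<in> II N" for i using pt[OF that] that by (auto simp: F_def)
    then show ?thesis by blast
  qed
  have set2: "{i\<in>II N. F i = 2} = {i\<in>II N. g i = 2 \<and> h i = -1}"
  proof -
    have "F i = 2 \<longleftrightarrow> g i = 2 \<and> h i = -1" if "i \<in> II N" for i using pt[OF that] that by (auto simp: F_def)
    then show ?thesis by blast
  qed
  have set1: "{i\<in>II N. F i = 1} = {i\<in>II N. g i = 0 \<and> h i = 0}"
  proof -
    have "F i = 1 \<longleftrightarrow> g i = 0 \<and> h i = 0" if "i \<in> II N" for i using pt[OF that] that by (auto simp: F_def)
    then show ?thesis by blast
  qed
  define a where "a = card {i\<in>II N. g i = 2 \<and> h i = -1}"
  define b where "b = card {i\<in>II N. g i = 2 \<and> h i = 0}"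
  define c where "c = card {i\<in>II N. g i = 0 \<and> h i = -1}"
  define d where "d = card {i\<in>II N. g i = 0 \<and> h i = 0}"
  have ab: "a + b = M" using pc(1) gc by (simp add: cc_def a_def b_def)
  have ac: "a + c = L" using pc(2) hc by (simp add: cc_def a_def c_def)
  have abcd: "a + b + c + d = N - 1" using pc(3) card_II[of N] by (simp add: a_def b_def c_def d_def)
  have c1: "c \<ge> 1"
  proof -
    have "g i0 = 0 \<and> h i0 = -1" using pt[OF i0I] i0 by auto
    then have "i0 \<in> {i\<in>II N. g i = 0 \<and> h i = -1}" using i0I by simp
    then have "{i\<in>II N. g i = 0 \<and> h i = -1} \<noteq> {}" by blast
    then have "c > 0" unfolding c_def by (subst card_gt_0_iff) auto
    then show ?thesis by simp
  qed
  have jp: "(\<lambda>p. (int (card {i\<in>II N. fst p i + snd p i = -1}) - 1, \<lambda>i. if i \<in> II N then fst p i + snd p i + 1 else 0)) p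
      = (int c - 1, F)"
  proof -
    have 1: "card {i\<in>II N. fst p i + snd p i = -1} = c" unfolding ph c_def using setc by simp
    have 2: "(\<lambda>i. if i \<in> II N then fst p i + snd p i + 1 else 0) = F" unfolding ph F_def by (simp only: fst_conv snd_conv)
    show ?thesis using 1 2 by simp
  qed
  have Fv: "\<forall>i\<in>II N. F i = 0 \<or> F i = 1 \<or> F i = 2 \<or> F i = 3"
  proof
    fix i assume "i \<in> II N"
    then show "F i = 0 \<or> F i = 1 \<or> F i = 2 \<or> F i = 3" using pt[of i] by (auto simp: F_def)
  qed
  have F0: "\<forall>i. i \<notin> II N \<longrightarrow> F i = 0" by (simp add: F_def)
  have "F \<in> GG N (replicate (nat (int M - int L + 1 + (int c - 1))) 3 @ replicate (nat (int L - 1 - (int c - 1))) 2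
                         @ replicate (nat (int N - int M - 2 - (int c - 1))) 1)"
    unfolding memGj cc_def set3 set2 set1 using Fv F0 ab ac abcd c1
    by (simp add: b_def[symmetric] a_def[symmetric] d_def[symmetric]) (intro conjI; arith)
  moreover have "int c - 1 \<in> {j::int. 0 \<le> j \<and> j \<le> int N - int M - 2 \<and> j \<le> int L - 1}"
    using ab ac abcd c1 by auto
  ultimately show "(\<lambda>p. (int (card {i\<in>II N. fst p i + snd p i = -1}) - 1, \<lambda>i. if i \<in> II N then fst p i + snd p i + 1 else 0)) p
      \<in> Sigma {j::int. 0 \<le> j \<and> j \<le> int N - int M - 2 \<and> j \<le> int L - 1}
              (\<lambda>j. GG N (replicate (nat (int M - int L + 1 + j)) 3 @ replicate (nat (int L - 1 - j)) 2
                         @ replicate (nat (int N - int M - 2 - j)) 1))"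
    unfolding jp by blast
  have "(\<lambda>i. if F i = 2 \<or> F i = 3 then 2 else 0) = g"
  proof
    fix i show "(if F i = 2 \<or> F i = 3 then 2 else 0) = g i"
      using pt[of i] g0 h0 by (cases "i \<in> II N") (auto simp: F_def)
  qed
  moreover have "(\<lambda>i. if i \<in> II N \<and> (F i = 0 \<or> F i = 2) then -1 else 0) = h"
  proof
    fix i show "(if i \<in> II N \<and> (F i = 0 \<or> F i = 2) then -1 else 0) = h i"
      using pt[of i] g0 h0 by (cases "i \<in> II N") (auto simp: F_def)
  qed
  ultimately show "(\<lambda>x. (\<lambda>i. if snd x i = 2 \<or> snd x i = 3 then 2 else 0, \<lambda>i. if i \<in> II N \<and> (snd x i = 0 \<or> snd x i = 2) then -1 else 0))
     ((\<lambda>p. (int (card {i\<in>II N. fst p i + snd p i = -1}) - 1, \<lambda>i. if i \<in> II N then fst p i + snd p i + 1 else 0)) p) = p"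
    unfolding jp using ph by simp
  show "WW N (snd ((\<lambda>p. (int (card {i\<in>II N. fst p i + snd p i = -1}) - 1, \<lambda>i. if i \<in> II N then fst p i + snd p i + 1 else 0)) p))
     = WW N (\<lambda>i. if i \<in> II N then fst p i + snd p i + 1 else 0)" by simp
next
  fix x assume x: "x \<in> Sigma {j::int. 0 \<le> j \<and> j \<le> int N - int M - 2 \<and> j \<le> int L - 1}
              (\<lambda>j. GG N (replicate (nat (int M - int L + 1 + j)) 3 @ replicate (nat (int L - 1 - j)) 2
                         @ replicate (nat (int N - int M - 2 - j)) 1))"
  obtain j F where xj: "x = (j, F)" by (cases x)
  have jJ: "0 \<le> j" "j \<le> int N - int M - 2" "j \<le> int L - 1" using x xj by auto
  have F0: "\<forall>i. i \<notin> II N \<longrightarrow> F i = 0" and Fv: "\<forall>i\<in>II N. F i = 0 \<or> F i = 1 \<or> F i = 2 \<or> F i = 3"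
    and c3: "cc N F 3 = nat (int M - int L + 1 + j)" and c2: "cc N F 2 = nat (int L - 1 - j)"
    and c1: "cc N F 1 = nat (int N - int M - 2 - j)"
    using x xj by (auto simp: memGj)
  have qc: "card (II N) = cc N F 0 + cc N F 1 + cc N F 2 + cc N F 3"
    unfolding cc_def by (rule quad_counts[OF finite_II Fv])
  have c0: "int (cc N F 0) = j + 1" using qc c1 c2 c3 card_II[of N] jJ LM MN by (simp, arith)
  define g where "g = (\<lambda>i. if F i = 2 \<or> F i = 3 then 2 else (0::int))"
  define h where "h = (\<lambda>i. if i \<in> II N \<and> (F i = 0 \<or> F i = 2) then -1 else (0::int))"
  have ix: "(\<lambda>x. (\<lambda>i. if snd x i = 2 \<or> snd x i = 3 then 2 else 0, \<lambda>i. if i \<in> II N \<and> (snd x i = 0 \<or> snd x i = 2) then -1 else 0)) x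
     = (g, h)" using xj by (simp add: g_def h_def)
  have sgh: "{i\<in>II N. g i + h i = -1} = {i\<in>II N. F i = 0}"
  proof -
    have "g i + h i = -1 \<longleftrightarrow> F i = 0" if "i \<in> II N" for i using Fv[rule_format, OF that] that by (auto simp: g_def h_def)
    then show ?thesis by blast
  qed
  have shf: "(\<lambda>i. if i \<in> II N then g i + h i + 1 else 0) = F"
  proof
    fix i show "(if i \<in> II N then g i + h i + 1 else 0) = F i"
      using Fv[rule_format, of i] F0[rule_format, of i] by (cases "i \<in> II N") (auto simp: g_def h_def)
  qed
  show "(\<lambda>p. (int (card {i\<in>II N. fst p i + snd p i = -1}) - 1, \<lambda>i. if i \<in> II N then fst p i + snd p i + 1 else 0))
     ((\<lambda>x. (\<lambda>i. if snd x i = 2 \<or> snd x i = 3 then 2 else 0, \<lambda>i. if i \<in> II N \<and> (snd x i = 0 \<or> snd x i = 2) then -1 else 0)) x) = x"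
    unfolding ix using sgh shf c0 xj by (simp add: cc_def cong: if_cong)
  have sg: "{i\<in>II N. g i = 2} = {i\<in>II N. F i = 2 \<or> F i = 3}" by (auto simp: g_def)
  have sh: "{i\<in>II N. h i = -1} = {i\<in>II N. F i = 0 \<or> F i = 2}" by (auto simp: h_def)
  have cg: "cc N g 2 = M"
    unfolding cc_def sg two_counts[OF finite_II[of N], where a=2 and b=3 and f=F, simplified]
    using c2 c3 jJ LM by (simp add: cc_def)
  have ch: "cc N h (-1) = L"
    unfolding cc_def sh two_counts[OF finite_II[of N], where a=0 and b=2 and f=F, simplified]
    using c2 c0 jJ by (simp add: cc_def)
  have "cc N F 0 \<noteq> 0" using c0 jJ by linarith
  then obtain i0 where i0: "i0 \<in> II N" "F i0 = 0" unfolding cc_def by (metis (mono_tags, lifting) Collect_empty_eq card.empty)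
  have gvv: "\<forall>i\<in>II N. g i = 0 \<or> g i = 2" "\<forall>i. i \<notin> II N \<longrightarrow> g i = 0"
    using F0 by (auto simp: g_def)
  have hvv: "\<forall>i\<in>II N. h i = 0 \<or> h i = -1" "\<forall>i. i \<notin> II N \<longrightarrow> h i = 0"
    by (auto simp: h_def)
  have "g i0 + h i0 = -1" using i0 by (simp add: g_def h_def)
  then show "(\<lambda>x. (\<lambda>i. if snd x i = 2 \<or> snd x i = 3 then 2 else 0, \<lambda>i. if i \<in> II N \<and> (snd x i = 0 \<or> snd x i = 2) then -1 else 0)) x
     \<in> (GG N (replicate M 2) \<times> GG N (replicate L (-1))) - {p. \<forall>i. fst p i + snd p i \<noteq> -1}"
    unfolding ix using gvv hvv cg ch by (auto simp: memA memB)
qed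


theorem proposition2:
  fixes n m l :: int
  assumes "n - 1 \<ge> m" and "m \<ge> l" and "l \<ge> 0"
  shows "Zn (nat n) (replicate (nat m) 2) * Zn (nat n) (replicate (nat l) (-1))
    = Yblocks (nat n) [(2, m - l), (1, l)]
      + (\<Prod>r=1..nat n - 1. (1 - zeta (nat n) ^ r))
        * (\<Sum>j=0..n - m - 2. Yblocks (nat n) [(3, m - l + 1 + j), (2, l - 1 - j), (1, n - m - 2 - j)])"
proof -
  define N where "N = nat n"
  define M where "M = nat m"
  define L where "L = nat l"
  have nN: "n = int N" and mM: "m = int M" and lL: "l = int L"
    using assms by (auto simp: N_def M_def L_def)
  have LM: "L \<le> M" and MN: "M + 1 \<le> N" using assms nN mM lL by auto
  define A where "A = GG N (replicate M 2)"
  define B where "B = GG N (replicate L (-1))"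
  define Q where "Q = {p::(nat \<Rightarrow> int) \<times> (nat \<Rightarrow> int). \<forall>i. fst p i + snd p i \<noteq> -1}"
  define J where "J = {j::int. 0 \<le> j \<and> j \<le> int N - int M - 2 \<and> j \<le> int L - 1}"
  define Gj where "Gj = (\<lambda>j. GG N (replicate (nat (int M - int L + 1 + j)) 3 @ replicate (nat (int L - 1 - j)) 2
                         @ replicate (nat (int N - int M - 2 - j)) 1))"
  define P where "P = prod (xx N) (II N)"
  have fA: "finite A" unfolding A_def by (rule finite_GG) simp
  have fB: "finite B" unfolding B_def by (rule finite_GG) simp
  have fJ: "finite J"
    by (rule finite_subset[of _ "{0..int N}"]) (auto simp: J_def)
  have zA: "Zn N (replicate M 2) = sum (WW N) A"
    unfolding A_def Zn_rep by (rule Yn_GG) simp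
  have zB: "Zn N (replicate L (-1)) = sum (WW N) B"
    unfolding B_def Zn_rep by (rule Yn_GG) simp
  have Y0: "Yblocks N [(2, m - l), (1, l)] = sum (WW N) (GG N (replicate (M-L) 2 @ replicate L 1))"
  proof -
    have "Yblocks N [(2, m - l), (1, l)] = Yn N (replicate (M-L) 2 @ replicate L 1)"
      using assms LM by (simp add: Yblocks_def mM lL nat_diff_distrib)
    also have "\<dots> = sum (WW N) (GG N (replicate (M-L) 2 @ replicate L 1))"
      by (rule Yn_GG) simp
    finally show ?thesis .
  qed
  have YJ: "(\<Sum>j=0..n - m - 2. Yblocks N [(3, m - l + 1 + j), (2, l - 1 - j), (1, n - m - 2 - j)])
      = (\<Sum>j\<in>J. sum (WW N) (Gj j))"
  proof -
    have "(\<Sum>j=0..n - m - 2. Yblocks N [(3, m - l + 1 + j), (2, l - 1 - j), (1, n - m - 2 - j)])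
        = (\<Sum>j\<in>J. Yblocks N [(3, m - l + 1 + j), (2, l - 1 - j), (1, n - m - 2 - j)])"
      by (rule sum.mono_neutral_right) (auto simp: J_def nN mM lL Yblocks_def)
    also have "\<dots> = (\<Sum>j\<in>J. sum (WW N) (Gj j))"
    proof (rule sum.cong)
      fix j assume j: "j \<in> J"
      then have "Yblocks N [(3, m - l + 1 + j), (2, l - 1 - j), (1, n - m - 2 - j)] = Yn N
          (replicate (nat (int M - int L + 1 + j)) 3 @ replicate (nat (int L - 1 - j)) 2
                         @ replicate (nat (int N - int M - 2 - j)) 1)"
        using LM by (auto simp: Yblocks_def J_def nN mM lL)
      also have "\<dots> = sum (WW N) (Gj j)" unfolding Gj_def by (rule Yn_GG) simp
      finally show "Yblocks N [(3, m - l + 1 + j), (2, l - 1 - j), (1, n - m - 2 - j)] = sum (WW N) (Gj j)" .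
    qed simp
    finally show ?thesis .
  qed
  have PP: "(\<Prod>r=1..nat n - 1. (1 - zeta (nat n) ^ r)) = P"
    by (simp add: P_def xx_def II_def N_def)
  have "sum (WW N) A * sum (WW N) B = (\<Sum>g\<in>A. \<Sum>h\<in>B. WW N g * WW N h)"
    by (simp add: sum_product)
  also have "\<dots> = (\<Sum>p\<in>A \<times> B. WW N (\<lambda>i. fst p i + snd p i))"
    by (simp add: sum.cartesian_product WW_mult split_def)
  also have "\<dots> = (\<Sum>p\<in>(A \<times> B) \<inter> Q. WW N (\<lambda>i. fst p i + snd p i))
                 + (\<Sum>p\<in>(A \<times> B) - Q. WW N (\<lambda>i. fst p i + snd p i))"
    by (rule sum.Int_Diff) (simp add: fA fB)
  also have "(\<Sum>p\<in>(A \<times> B) \<inter> Q. WW N (\<lambda>i. fst p i + snd p i)) = sum (WW N) (GG N (replicate (M-L) 2 @ replicate L 1))"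
    unfolding A_def B_def Q_def by (rule step3[OF LM])
  also have "(\<Sum>p\<in>(A \<times> B) - Q. WW N (\<lambda>i. fst p i + snd p i))
      = (\<Sum>p\<in>(A \<times> B) - Q. P * WW N (\<lambda>i. if i \<in> II N then fst p i + snd p i + 1 else 0))"
    unfolding P_def by (rule sum.cong) (simp_all add: WW_shift[symmetric])
  also have "\<dots> = P * (\<Sum>p\<in>(A \<times> B) - Q. WW N (\<lambda>i. if i \<in> II N then fst p i + snd p i + 1 else 0))"
    by (simp add: sum_distrib_left)
  also have "(\<Sum>p\<in>(A \<times> B) - Q. WW N (\<lambda>i. if i \<in> II N then fst p i + snd p i + 1 else 0))
      = (\<Sum>x\<in>Sigma J Gj. WW N (snd x))"
    unfolding A_def B_def Q_def J_def Gj_def by (rule step4_bij[OF LM MN])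
  also have "\<dots> = (\<Sum>j\<in>J. sum (WW N) (Gj j))"
    using fJ by (simp add: sum.Sigma Gj_def finite_GG split_def)
  finally show ?thesis
    using zA zB Y0 YJ PP by (simp add: N_def[symmetric] M_def[symmetric] L_def[symmetric])
qed

end
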